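(* Assume $\delta=d$ and $\gamma\ge1$. Then $$\frac{q(z,w)}{z^\gamma w^d}\longrightarrow1\quad\text{as } (z,w)\in W_R,\ R\to\infty$$ (i.e. as $|z|\to\infty$ and $|w|/|z|^\alpha\to\infty$ when $\alpha>-\infty$, and as $|z|\to\infty$ with $w\ne0$ when $\alpha=-\infty$), and there is $R_0>1$ such that $f(W_R)\subset W_R$ for all $R\ge R_0$.
   Context: Let $p(z)=z^d+O(z^{d-1})$ be a monic polynomial of degree $\delta=d\ge 2$, and let $q(z,w)=b(z)w^d+(\text{terms of lower degree in } w)$ be a polynomial with $\deg_w q=d$, where $b$ is a monic polynomial of degree $\gamma$. Let $f(z,w)=(p(z),q(z,w))$. Define $\alpha=\max\{(n_j-\gamma)/(d-m_j)\}$ over monomials $z^{n_j}w^{m_j}$ appearing in $q$ with nonzero coefficient and $m_j<d$, and $\alpha=-\infty$ if $q(z,w)=b(z)w^d$. Let $W_R=\{(z,w):|z|>R,\ |w|>R|z|^\alpha\}$ if $\alpha>-\infty$, and $W_R=\{(z,w):|z|>R,\ w\ne0\}$ if $\alpha=-\infty$. *)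

theory Defs
  imports "HOL-Analysis.Analysis" "HOL-Computational_Algebra.Polynomial" "HOL-Library.Extended_Real"
begin

text \<open>A polynomial q(z,w) in two complex variables is represented as a polynomial in w
whose coefficients are polynomials in z: the coefficient of the monomial z^n w^m is
coeff (coeff q m) n.\<close>

definition poly2 :: "complex poly poly \<Rightarrow> complex \<Rightarrow> complex \<Rightarrow> complex" where
  "poly2 q z w = (\<Sum>m\<le>degree q. poly (coeff q m) z * w ^ m)"

definition alpha_set :: "complex poly poly \<Rightarrow> real set" where
  "alpha_set q = {(real n - real (degree (lead_coeff q))) / (real (degree q) - real m) | n m.
                    m < degree q \<and> coeff (coeff q m) n \<noteq> 0}"

definition alpha :: "complex poly poly \<Rightarrow> ereal" where
  "alpha q = (if alpha_set q = {} then -\<infinity> else ereal (Max (alpha_set q)))"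

definition W :: "complex poly poly \<Rightarrow> real \<Rightarrow> (complex \<times> complex) set" where
  "W q R = (if alpha q = -\<infinity> then {(z, w). norm z > R \<and> w \<noteq> 0}
            else {(z, w). norm z > R \<and> norm w > R * norm z powr real_of_ereal (alpha q)})"

end

theory Submission imports Defs begin

lemma monic_bound:
  fixes P :: "complex poly"
  assumes "lead_coeff P = 1" "norm z \<ge> 1" "degree P = k"
  shows "norm (poly P z - z^k) \<le> (\<Sum>n<k. norm (coeff P n)) * norm z ^ (k-1)"
proof -
  have "poly P z = (\<Sum>n\<le>k. coeff P n * z^n)" using assms(3) by (simp add: poly_altdef)
  also have "\<dots> = (\<Sum>n<k. coeff P n * z^n) + z^k"
    using assms(1,3) by (simp add: lessThan_Suc_atMost[symmetric])
  finally have e: "poly P z - z^k = (\<Sum>n<k. coeff P n * z^n)" by simp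
  have "norm (\<Sum>n<k. coeff P n * z^n) \<le> (\<Sum>n<k. norm (coeff P n) * norm z ^ n)"
    by (rule order_trans[OF norm_sum]) (simp add: norm_mult norm_power)
  also have "\<dots> \<le> (\<Sum>n<k. norm (coeff P n) * norm z ^ (k-1))"
    by (rule sum_mono, rule mult_left_mono, rule power_increasing) (use assms(2) in auto)
  finally show ?thesis using e by (simp add: sum_distrib_right)
qed

lemma alpha_set_finite: "finite (alpha_set q)"
proof -
  have "alpha_set q \<subseteq> (\<lambda>(m,n). (real n - real (degree (lead_coeff q))) / (real (degree q) - real m))
          ` (SIGMA m:{..<degree q}. {..degree (coeff q m)})" (is "_ \<subseteq> ?B")
  proof
    fix x assume "x \<in> alpha_set q"
    then obtain n m where "m < degree q" "coeff (coeff q m) n \<noteq> 0"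
      "x = (real n - real (degree (lead_coeff q))) / (real (degree q) - real m)"
      unfolding alpha_set_def by blast
    then show "x \<in> ?B" by (intro image_eqI[where x="(m,n)"]) (auto dest: le_degree)
  qed
  then show ?thesis by (rule finite_subset) auto
qed

lemma key_mono:
  fixes x y R a :: real and n m g d :: nat
  assumes "R \<ge> 1" "x > R" "y > R * x powr a" "m < d"
    and "real n - real g \<le> a * (real d - real m)"
  shows "R * x^n * y^m \<le> x^g * y^d"
proof -
  have x0: "x > 0" "x \<ge> 1" using assms by auto
  have y0: "y \<ge> 0" using assms(1,3) by (smt (verit) powr_ge_zero mult_nonneg_nonneg)
  have "y^(d-m) \<ge> (R * x powr a)^(d-m)"
    by (rule power_mono) (use assms(1,3) in auto)
  also have "(R * x powr a)^(d-m) = R^(d-m) * x powr (a * real (d-m))"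
    using x0 by (simp add: power_mult_distrib powr_power mult.commute)
  finally have 1: "y^(d-m) \<ge> R^(d-m) * x powr (a * real (d-m))" .
  have "R^(d-m) \<ge> R" using assms(1,4)
    by (metis One_nat_def Suc_leI power_increasing power_one_right zero_less_diff)
  moreover have "x powr (a * real (d-m)) \<ge> x powr (real n - real g)"
    using assms(4,5) x0 by (intro powr_mono) (auto simp: of_nat_diff)
  ultimately have 2: "y^(d-m) \<ge> R * x powr (real n - real g)" using 1 assms(1)
    by (smt (verit) mult_mono powr_ge_zero)
  have 3: "x^g * x powr (real n - real g) = x^n"
    using x0 by (simp add: powr_realpow[symmetric] powr_add[symmetric])
  have "R * x^n * y^m = y^m * (x^g * (R * x powr (real n - real g)))" using 3 by (simp add: algebra_simps)
  also have "\<dots> \<le> y^m * (x^g * y^(d-m))"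
    using 2 x0 y0 by (intro mult_left_mono) auto
  also have "\<dots> = x^g * y^d" using assms(4) by (simp add: power_add[symmetric] algebra_simps)
  finally show ?thesis .
qed

lemma poly2_split:
  assumes "degree q = d"
  shows "poly2 q z w = (\<Sum>m<d. poly (coeff q m) z * w^m) + poly (lead_coeff q) z * w^d"
  unfolding poly2_def using assms by (simp add: lessThan_Suc_atMost[symmetric])

lemma alpha_empty:
  assumes "alpha q = -\<infinity>" "m < degree q"
  shows "coeff q m = 0"
proof -
  have "alpha_set q = {}" using assms(1) unfolding alpha_def by (auto split: if_splits)
  then have "coeff (coeff q m) n = 0" for n using assms(2) unfolding alpha_set_def by blast
  then show ?thesis by (simp add: poly_eq_iff)
qed

lemma W_mem:
  assumes "(z,w) \<in> W q R" "R \<ge> 1"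
  shows "norm z > R" "w \<noteq> 0"
proof -
  show "norm z > R" using assms unfolding W_def by (auto split: if_splits)
  have h: "0 \<le> R * norm z powr real_of_ereal (alpha q)" using assms(2) by simp
  show "w \<noteq> 0"
  proof (cases "alpha q = -\<infinity>")
    case True then show ?thesis using assms unfolding W_def by auto
  next
    case False
    then have "norm w > R * norm z powr real_of_ereal (alpha q)" using assms unfolding W_def by auto
    then show ?thesis using h by auto
  qed
qed

lemma Lq:
  fixes q :: "complex poly poly"
  defines "Kq \<equiv> (\<Sum>m<degree q. \<Sum>n\<le>degree (coeff q m). norm (coeff (coeff q m) n))"
  assumes "R \<ge> 1" "(z,w) \<in> W q R"
  shows "norm (poly2 q z w - poly (lead_coeff q) z * w^degree q) * R
           \<le> Kq * (norm z ^ degree (lead_coeff q) * norm w ^ degree q)"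
proof (cases "alpha q = -\<infinity>")
  case True
  then have "poly2 q z w - poly (lead_coeff q) z * w^degree q = 0"
    using poly2_split[OF refl, of q z w] alpha_empty[OF True] by simp
  moreover have "Kq \<ge> 0" unfolding Kq_def by (intro sum_nonneg) auto
  ultimately show ?thesis by simp
next
  case False
  define a where "a = real_of_ereal (alpha q)"
  have ne: "alpha_set q \<noteq> {}" using False unfolding alpha_def by auto
  have aeq: "a = Max (alpha_set q)" using ne unfolding a_def alpha_def by simp
  have zw: "norm z > R" "norm w > R * norm z powr a"
    using assms(3) False unfolding W_def a_def by auto
  let ?g = "degree (lead_coeff q)" and ?d = "degree q"
  let ?M = "norm z ^ ?g * norm w ^ ?d"
  have mono: "R * norm z ^ n * norm w ^ m \<le> ?M"
    if "m < ?d" "coeff (coeff q m) n \<noteq> 0" for m n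
  proof (rule key_mono[OF assms(2) zw that(1)])
    have "(real n - real ?g) / (real ?d - real m) \<in> alpha_set q"
      using that unfolding alpha_set_def by blast
    then have "(real n - real ?g) / (real ?d - real m) \<le> a"
      unfolding aeq using alpha_set_finite by simp
    moreover have "real ?d - real m > 0" using that by simp
    ultimately show "real n - real ?g \<le> a * (real ?d - real m)"
      by (simp add: pos_divide_le_eq)
  qed
  have tm: "norm (poly (coeff q m) z * w^m) * R
      \<le> (\<Sum>n\<le>degree (coeff q m). norm (coeff (coeff q m) n)) * ?M" if "m < ?d" for m
  proof -
    have "norm (poly (coeff q m) z * w^m) * R
        = norm (\<Sum>n\<le>degree (coeff q m). coeff (coeff q m) n * z ^ n * w^m) * R"
      by (simp add: poly_altdef sum_distrib_right)
    also have "\<dots> \<le> (\<Sum>n\<le>degree (coeff q m). norm (coeff (coeff q m) n) * (R * norm z ^ n * norm w ^ m))"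
    proof -
      have "norm (\<Sum>n\<le>degree (coeff q m). coeff (coeff q m) n * z ^ n * w^m)
          \<le> (\<Sum>n\<le>degree (coeff q m). norm (coeff (coeff q m) n * z ^ n * w^m))"
        by (rule norm_sum)
      then have "norm (\<Sum>n\<le>degree (coeff q m). coeff (coeff q m) n * z ^ n * w^m) * R
          \<le> (\<Sum>n\<le>degree (coeff q m). norm (coeff (coeff q m) n * z ^ n * w^m)) * R"
        using assms(2) by (intro mult_right_mono) auto
      also have "\<dots> = (\<Sum>n\<le>degree (coeff q m). norm (coeff (coeff q m) n) * (R * norm z ^ n * norm w ^ m))"
        by (simp add: sum_distrib_right sum_distrib_left norm_mult norm_power algebra_simps)
      finally show ?thesis .
    qed
    also have "\<dots> \<le> (\<Sum>n\<le>degree (coeff q m). norm (coeff (coeff q m) n) * ?M)"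
    proof (rule sum_mono)
      fix n show "norm (coeff (coeff q m) n) * (R * norm z ^ n * norm w ^ m)
          \<le> norm (coeff (coeff q m) n) * ?M"
        using mono[OF that, of n] by (cases "coeff (coeff q m) n = 0") (auto intro: mult_left_mono)
    qed
    finally show ?thesis by (simp add: sum_distrib_right)
  qed
  have "norm (poly2 q z w - poly (lead_coeff q) z * w^?d) * R
      = norm (\<Sum>m<?d. poly (coeff q m) z * w^m) * R"
    using poly2_split[OF refl, of q z w] by simp
  also have "\<dots> \<le> (\<Sum>m<?d. norm (poly (coeff q m) z * w^m) * R)"
    using assms(2) by (simp add: sum_distrib_right[symmetric] mult_right_mono norm_sum)
  also have "\<dots> \<le> (\<Sum>m<?d. (\<Sum>n\<le>degree (coeff q m). norm (coeff (coeff q m) n)) * ?M)"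
    by (rule sum_mono) (use tm in auto)
  finally show ?thesis unfolding Kq_def by (simp add: sum_distrib_right)
qed

theorem lemma6p2:
  fixes p :: "complex poly" and q :: "complex poly poly" and d :: nat
  defines "b \<equiv> lead_coeff q"
  defines "\<gamma> \<equiv> degree b"
  defines "f \<equiv> (\<lambda>(z, w). (poly p z, poly2 q z w))"
  assumes "d \<ge> 2"
    and "degree p = d" and "lead_coeff p = 1"
    and "degree q = d"
    and "lead_coeff b = 1"
    and "\<gamma> \<ge> 1"
  shows "(\<forall>\<epsilon>>0. \<exists>R. \<forall>(z, w)\<in>W q R. norm (poly2 q z w / (z ^ \<gamma> * w ^ d) - 1) < \<epsilon>)
         \<and> (\<exists>R0>1. \<forall>R\<ge>R0. f ` W q R \<subseteq> W q R)"
proof -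
  define Kq where "Kq = (\<Sum>m<degree q. \<Sum>n\<le>degree (coeff q m). norm (coeff (coeff q m) n))"
  define Kb where "Kb = (\<Sum>n<\<gamma>. norm (coeff b n))"
  define Kp where "Kp = (\<Sum>n<d. norm (coeff p n))"
  have Kq0: "Kq \<ge> 0" unfolding Kq_def by (intro sum_nonneg) auto
  have Kb0: "Kb \<ge> 0" unfolding Kb_def by (intro sum_nonneg) auto
  have Kp0: "Kp \<ge> 0" unfolding Kp_def by (intro sum_nonneg) auto
  have Lc: "norm (poly2 q z w - z^\<gamma> * w^d) * R \<le> (Kq + Kb) * (norm z ^ \<gamma> * norm w ^ d)"
    if R: "R \<ge> 1" and zw: "(z,w) \<in> W q R" for R z w
  proof -
    have e1: "norm (poly2 q z w - poly b z * w^d) * R \<le> Kq * (norm z ^ \<gamma> * norm w ^ d)"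
      using Lq[OF R zw] unfolding Kq_def b_def \<gamma>_def using assms(7) by simp
    have nz: "norm z > R" using W_mem[OF zw R] by auto
    have e2: "norm (poly b z - z^\<gamma>) \<le> Kb * norm z ^ (\<gamma>-1)"
      unfolding Kb_def by (rule monic_bound) (use assms(8) nz R \<gamma>_def in auto)
    have "norm ((poly b z - z^\<gamma>) * w^d) * R = norm (poly b z - z^\<gamma>) * (norm z ^ (\<gamma>-1) * 0 + R) * norm w ^ d"
      by (simp add: norm_mult norm_power)
    also have "\<dots> \<le> Kb * norm z ^ (\<gamma>-1) * R * norm w ^ d"
      using e2 R by (simp add: mult_right_mono)
    also have "\<dots> \<le> Kb * norm z ^ (\<gamma>-1) * norm z * norm w ^ d"
      using nz Kb0 by (intro mult_right_mono mult_left_mono) auto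
    also have "\<dots> = Kb * (norm z ^ \<gamma> * norm w ^ d)"
      using assms(9) by (simp add: power_Suc2[symmetric] del: power_Suc2)
    finally have e3: "norm ((poly b z - z^\<gamma>) * w^d) * R \<le> Kb * (norm z ^ \<gamma> * norm w ^ d)" .
    have "poly2 q z w - z^\<gamma> * w^d = (poly2 q z w - poly b z * w^d) + (poly b z - z^\<gamma>) * w^d"
      by (simp add: algebra_simps)
    then have "norm (poly2 q z w - z^\<gamma> * w^d) * R
        \<le> (norm (poly2 q z w - poly b z * w^d) + norm ((poly b z - z^\<gamma>) * w^d)) * R"
      using R by (metis mult_right_mono norm_triangle_ineq order_trans zero_le_one)
    also have "\<dots> \<le> (Kq + Kb) * (norm z ^ \<gamma> * norm w ^ d)"
      using e1 e3 by (simp add: distrib_right)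
    finally show ?thesis .
  qed
  have part1: "\<forall>\<epsilon>>0. \<exists>R. \<forall>(z, w)\<in>W q R. norm (poly2 q z w / (z ^ \<gamma> * w ^ d) - 1) < \<epsilon>"
  proof (intro allI impI)
    fix \<epsilon> :: real assume e: "\<epsilon> > 0"
    define R where "R = max 1 (2 * (Kq + Kb) / \<epsilon>)"
    have R1: "R \<ge> 1" unfolding R_def by simp
    have RK: "(Kq + Kb) \<le> R * \<epsilon> / 2" using e unfolding R_def
      by (auto simp: field_simps max_def)
    show "\<exists>R. \<forall>(z, w)\<in>W q R. norm (poly2 q z w / (z ^ \<gamma> * w ^ d) - 1) < \<epsilon>"
    proof (intro exI ballI, clarify)
      fix z w assume zw: "(z,w) \<in> W q R"
      have nz: "norm z > R" "w \<noteq> 0" using W_mem[OF zw R1] by auto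
      have z0: "z \<noteq> 0" using nz R1 by auto
      have M0: "norm z ^ \<gamma> * norm w ^ d > 0" using z0 nz by simp
      have "norm (poly2 q z w / (z ^ \<gamma> * w ^ d) - 1)
          = norm (poly2 q z w - z ^ \<gamma> * w ^ d) / (norm z ^ \<gamma> * norm w ^ d)"
      proof -
        have "poly2 q z w / (z ^ \<gamma> * w ^ d) - 1 = (poly2 q z w - z ^ \<gamma> * w ^ d) / (z ^ \<gamma> * w ^ d)"
          using z0 nz by (simp add: field_simps)
        then show ?thesis by (simp add: norm_divide norm_mult norm_power)
      qed
      also have "\<dots> \<le> ((Kq + Kb) / R)"
        using Lc[OF R1 zw] M0 R1 by (simp add: divide_simps mult.commute)
      also have "\<dots> \<le> \<epsilon> / 2" using RK R1 by (simp add: divide_simps mult.commute)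
      also have "\<dots> < \<epsilon>" using e by simp
      finally show "norm (poly2 q z w / (z ^ \<gamma> * w ^ d) - 1) < \<epsilon>" .
    qed
  qed
  define a where "a = real_of_ereal (alpha q)"
  define C where "C = 2 powr \<bar>a\<bar>"
  have C0: "C > 0" unfolding C_def by simp
  define R0 where "R0 = max 2 (max (2*Kp+1) (max (2*(Kq+Kb)) (2*C)))"
  have part2: "\<forall>R\<ge>R0. f ` W q R \<subseteq> W q R"
  proof (intro allI impI subsetI)
    fix R y assume R: "R \<ge> R0" and y: "y \<in> f ` W q R"
    then obtain z w where zw: "(z,w) \<in> W q R" and yeq: "y = (poly p z, poly2 q z w)"
      unfolding f_def by auto
    have R2: "R \<ge> 2" "R \<ge> 2*Kp+1" "R \<ge> 2*(Kq+Kb)" "R \<ge> 2*C" using R unfolding R0_def by auto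
    have R1: "R \<ge> 1" using R2 by simp
    have nz: "norm z > R" and w0: "w \<noteq> 0" using W_mem[OF zw R1] by auto
    have z1: "norm z \<ge> 1" using nz R1 by simp
    have z0: "z \<noteq> 0" using z1 by auto
    have P1: "norm (poly p z - z^d) \<le> Kp * norm z ^ (d-1)"
      unfolding Kp_def by (rule monic_bound) (use assms z1 in auto)
    have zd: "norm z ^ d = norm z ^ (d-1) * norm z" using assms(4)
      by (simp add: power_Suc2[symmetric] del: power_Suc2)
    have zpos: "norm z ^ (d-1) > 0" using z1 by (intro zero_less_power) linarith
    have plow: "norm (poly p z) \<ge> norm z ^ d / 2"
    proof -
      have "norm (poly p z) \<ge> norm (z^d) - norm (poly p z - z^d)"
        by (metis norm_minus_commute norm_triangle_ineq2 diff_le_eq add.commute norm_diff_ineq)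
      then have "norm (poly p z) \<ge> norm z ^ d - Kp * norm z ^ (d-1)" using P1 by (simp add: norm_power)
      moreover have "Kp * norm z ^ (d-1) \<le> norm z ^ (d-1) * (norm z / 2)"
        using zpos nz R2 by (simp add: mult.commute)
      ultimately show ?thesis using zd by simp
    qed
    have pup: "norm (poly p z) \<le> 2 * norm z ^ d"
    proof -
      have "norm (poly p z) \<le> norm (z^d) + norm (poly p z - z^d)"
        by (metis add.commute diff_add_cancel norm_triangle_ineq)
      then have "norm (poly p z) \<le> norm z ^ d + Kp * norm z ^ (d-1)" using P1 by (simp add: norm_power)
      moreover have "Kp * norm z ^ (d-1) \<le> norm z ^ (d-1) * norm z"
        using zpos nz R2 by (simp add: mult.commute)
      ultimately show ?thesis using zd by simp
    qed
    have "norm z ^ d \<ge> norm z ^ 2" using z1 assms(4) by (rule power_increasing[rotated])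
    also have "norm z ^ 2 \<ge> 2 * norm z" using nz R2 by (simp add: power2_eq_square mult_right_mono)
    finally have "norm z ^ d / 2 > R" using nz by simp
    then have pR: "norm (poly p z) > R" using plow by simp
    have M0: "norm z ^ \<gamma> * norm w ^ d > 0" using z0 w0 by simp
    have Q: "norm (poly2 q z w) \<ge> norm z ^ \<gamma> * norm w ^ d / 2"
    proof -
      have "norm (poly2 q z w - z^\<gamma> * w^d) * R \<le> (Kq + Kb) * (norm z ^ \<gamma> * norm w ^ d)"
        by (rule Lc[OF R1 zw])
      also have "\<dots> \<le> R / 2 * (norm z ^ \<gamma> * norm w ^ d)"
        using R2 M0 by (intro mult_right_mono) auto
      finally have "norm (poly2 q z w - z^\<gamma> * w^d) \<le> norm z ^ \<gamma> * norm w ^ d / 2"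
        using R1 by (simp add: mult.commute)
      moreover have "norm (poly2 q z w) \<ge> norm (z^\<gamma> * w^d) - norm (poly2 q z w - z^\<gamma> * w^d)"
        by (metis norm_minus_commute norm_triangle_ineq2 diff_le_eq add.commute norm_diff_ineq)
      ultimately show ?thesis by (simp add: norm_mult norm_power)
    qed
    show "y \<in> W q R"
    proof (cases "alpha q = -\<infinity>")
      case True
      then show ?thesis using yeq pR Q M0 unfolding W_def by auto
    next
      case False
      define t where "t = norm z powr a"
      have t0: "t > 0" unfolding t_def using z0 by simp
      have zda: "(norm z ^ d) powr a = t ^ d"
        unfolding t_def using z0 by (simp add: powr_power powr_realpow[symmetric] powr_powr mult.commute)
      have pa: "norm (poly p z) powr a \<le> C * t ^ d"
      proof (cases "a \<ge> 0")
        case True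
        have "norm (poly p z) powr a \<le> (2 * norm z ^ d) powr a"
          using True pup by (intro powr_mono2) auto
        also have "\<dots> = 2 powr a * t ^ d" using zda by (simp add: powr_mult)
        also have "\<dots> \<le> C * t ^ d" unfolding C_def using t0
          by (intro mult_right_mono powr_mono) auto
        finally show ?thesis .
      next
        case False
        have "norm (poly p z) powr a \<le> (norm z ^ d / 2) powr a"
          using False plow z0 by (intro powr_mono2') auto
        also have "\<dots> = t ^ d / 2 powr a" using zda z1 by (simp add: powr_divide)
        also have "\<dots> = 2 powr (-a) * t ^ d" by (simp add: powr_minus divide_inverse)
        also have "\<dots> \<le> C * t ^ d" unfolding C_def using t0 False
          by (intro mult_right_mono powr_mono) auto
        finally show ?thesis .
      qed
      have wt: "norm w > R * t" using zw False unfolding W_def t_def a_def by auto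
      have "norm w ^ d > (R * t) ^ d"
        using wt t0 R1 assms(4) by (intro power_strict_mono) auto
      then have "norm z ^ \<gamma> * norm w ^ d / 2 > norm z ^ \<gamma> * (R * t) ^ d / 2"
        using z0 by simp
      moreover have "norm z ^ \<gamma> * (R * t) ^ d / 2 \<ge> R * (C * t ^ d)"
      proof -
        have "norm z ^ \<gamma> \<ge> R" using nz z1 assms(9)
          by (metis order.strict_implies_order order_trans power_increasing power_one_right)
        moreover have "R ^ d \<ge> R ^ 2" using R1 assms(4) by (rule power_increasing[rotated])
        ultimately have "norm z ^ \<gamma> * R ^ d \<ge> R * R ^ 2"
          using R1 by (intro mult_mono) auto
        moreover have "R * R ^ 2 \<ge> R * (2 * C)"
        proof -
          have "R * R \<ge> 1 * R" using R1 by (intro mult_right_mono) auto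
          then have "R ^ 2 \<ge> 2 * C" unfolding power2_eq_square using R2 by linarith
          then show ?thesis using R1 by (intro mult_left_mono) auto
        qed
        ultimately have "norm z ^ \<gamma> * R ^ d \<ge> 2 * (R * C)" by simp
        then have "norm z ^ \<gamma> * R ^ d * t ^ d \<ge> 2 * (R * C) * t ^ d"
          using t0 by (intro mult_right_mono) auto
        then show ?thesis by (simp add: power_mult_distrib algebra_simps)
      qed
      moreover have "R * (C * t ^ d) \<ge> R * norm (poly p z) powr a"
        using pa R1 by (intro mult_left_mono) auto
      ultimately have "norm (poly2 q z w) > R * norm (poly p z) powr a" using Q by linarith
      then show ?thesis using yeq pR False unfolding W_def a_def by auto
    qed
  qed
  have "R0 > 1" unfolding R0_def by simp
  then show ?thesis using part1 part2 by blast
qed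
end
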